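(* Assume $p$ is odd and $\ell\ge2$. An irreducible representation of ${\rm GL}_2(\mathfrak o_\ell)$ admits a $\theta$-Whittaker model for a (equivalently, any) non-degenerate character $\theta$ of $\mathbf U(\mathfrak o_\ell)$ if and only if it is primitive.
   Context: $\mathfrak o$: ring of integers of a non-archimedean local field, uniformizer $\varpi$, residue field $\mathbb F_q$ of characteristic $p$; $\mathfrak o_r=\mathfrak o/\varpi^r\mathfrak o$. $\mathbf U(\mathfrak o_\ell)=\{\begin{pmatrix}1&u\\0&1\end{pmatrix}\}$; a non-degenerate character is $\theta\begin{pmatrix}1&u\\0&1\end{pmatrix}=\varphi_1(u)$ with $\varphi_1$ a character of $(\mathfrak o_\ell,+)$ nontrivial on $\varpi^{\ell-1}\mathfrak o_\ell$. $\pi$ admits a $\theta$-Whittaker model if $\mathrm{Hom}(\pi,\mathrm{Ind}_{\mathbf U(\mathfrak o_\ell)}^{{\rm GL}_2(\mathfrak o_\ell)}\theta)\ne0$. Let $K_\ell^{\ell-1}=\ker({\rm GL}_2(\mathfrak o_\ell)\to{\rm GL}_2(\mathfrak o_{\ell-1}))=\{I+\varpi^{\ell-1}y\}$; fixing a primitive $\varphi$, each $x\in M_2(\mathbb F_q)$ gives a character $\varphi_x(I+\varpi^{\ell-1}y)=\varphi(\varpi^{\ell-1}\mathrm{tr}(\hat xy))$. An irreducible representation $\rho$ is primitive if the orbit of characters occurring in $\rho|_{K_\ell^{\ell-1}}$ contains no $\varphi_x$ with $x$ a scalar matrix. *)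

theory Defs
  imports "HOL-Analysis.Analysis" "HOL-Library.Numeral_Type"
begin

text \<open>The finite ring o_l = o / varpi^l o, abstractly: a finite commutative ring R with an
element varpi such that every element is a unit or divisible by varpi (local ring with
principal maximal ideal (varpi)), varpi^l = 0, varpi^(l-1) \<noteq> 0, and residue field
R/(varpi) of characteristic p (a prime with p = 0 in R/(varpi)).\<close>
definition trunc_dvr_ring :: "'r::{comm_ring_1,finite} \<Rightarrow> nat \<Rightarrow> nat \<Rightarrow> bool" where
  "trunc_dvr_ring w l p \<longleftrightarrow>
     (\<forall>a::'r. a dvd 1 \<or> w dvd a) \<and> w ^ l = 0 \<and> w ^ (l - 1) \<noteq> 0 \<and>
     prime p \<and> w dvd (of_nat p :: 'r)"

definition GL2 :: "(('r::comm_ring_1)^2^2) set" where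
  "GL2 = {A. \<exists>B. A ** B = mat 1 \<and> B ** A = mat 1}"

definition unip :: "'r::comm_ring_1 \<Rightarrow> 'r^2^2" where
  "unip u = vector [vector [1, u], vector [0, 1]]"

definition add_char :: "('r::comm_ring_1 \<Rightarrow> complex) \<Rightarrow> bool" where
  "add_char f \<longleftrightarrow> f 0 = 1 \<and> (\<forall>a b. f (a + b) = f a * f b)"

text \<open>An additive character nontrivial on varpi^(l-1) R (used both for non-degenerate
characters theta(unip u) = psi u of U, and for the fixed primitive character phi).\<close>
definition nondeg_char :: "'r::comm_ring_1 \<Rightarrow> nat \<Rightarrow> ('r \<Rightarrow> complex) \<Rightarrow> bool" where
  "nondeg_char w l f \<longleftrightarrow> add_char f \<and> (\<exists>a. f (w ^ (l - 1) * a) \<noteq> 1)"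

definition is_rep :: "('r::comm_ring_1^2^2 \<Rightarrow> complex^'n^'n) \<Rightarrow> bool" where
  "is_rep \<rho> \<longleftrightarrow> \<rho> (mat 1) = mat 1 \<and>
     (\<forall>g\<in>GL2. \<forall>h\<in>GL2. \<rho> (g ** h) = \<rho> g ** \<rho> h)"

definition csubspace :: "(complex^'n) set \<Rightarrow> bool" where
  "csubspace W \<longleftrightarrow> 0 \<in> W \<and> (\<forall>v\<in>W. \<forall>w\<in>W. v + w \<in> W) \<and> (\<forall>c. \<forall>v\<in>W. c *s v \<in> W)"

definition irreducible_rep :: "('r::comm_ring_1^2^2 \<Rightarrow> complex^'n^'n) \<Rightarrow> bool" where
  "irreducible_rep \<rho> \<longleftrightarrow> is_rep \<rho> \<and>
     (\<forall>W. csubspace W \<and> (\<forall>g\<in>GL2. \<forall>v\<in>W. \<rho> g *v v \<in> W) \<longrightarrow> W = {0} \<or> W = UNIV)"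

text \<open>theta-Whittaker model, theta(unip u) = psi u:
 Hom_G(rho, Ind_U^G theta) \<noteq> 0, where Ind_U^G theta = {f : G \<rightarrow> C | f(u g) = theta(u) f(g)}
 with G acting by right translation (g f)(x) = f(x g). A G-map is a complex-linear
 T : complex^'n \<rightarrow> Ind theta (functions are only relevant on GL2).\<close>
definition has_whittaker :: "('r::comm_ring_1^2^2 \<Rightarrow> complex^'n^'n) \<Rightarrow> ('r \<Rightarrow> complex) \<Rightarrow> bool" where
  "has_whittaker \<rho> \<psi> \<longleftrightarrow>
    (\<exists>T :: complex^'n \<Rightarrow> ('r^2^2 \<Rightarrow> complex).
       (\<forall>v w x. x \<in> GL2 \<longrightarrow> T (v + w) x = T v x + T w x) \<and>
       (\<forall>c v x. x \<in> GL2 \<longrightarrow> T (c *s v) x = c * T v x) \<and>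
       (\<forall>v u x. x \<in> GL2 \<longrightarrow> T v (unip u ** x) = \<psi> u * T v x) \<and>
       (\<forall>v g x. g \<in> GL2 \<longrightarrow> x \<in> GL2 \<longrightarrow> T (\<rho> g *v v) x = T v (x ** g)) \<and>
       (\<exists>v. \<exists>x\<in>GL2. T v x \<noteq> 0))"

definition Kl :: "'r::comm_ring_1 \<Rightarrow> nat \<Rightarrow> ('r^2^2) set" where
  "Kl w l = {mat 1 + mat (w ^ (l - 1)) ** y | y. True}"

definition occurs_in :: "('r::comm_ring_1^2^2 \<Rightarrow> complex^'n^'n) \<Rightarrow> 'r \<Rightarrow> nat \<Rightarrow> ('r^2^2 \<Rightarrow> complex) \<Rightarrow> bool" where
  "occurs_in \<rho> w l ch \<longleftrightarrow> (\<exists>v. v \<noteq> 0 \<and> (\<forall>k\<in>Kl w l. \<rho> k *v v = ch k *s v))"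

text \<open>The character chi agrees on K_l^{l-1} with phi_x, x given by a lift xh in M_2(R):
 phi_x(I + varpi^(l-1) y) = phi(varpi^(l-1) tr(xh y)).\<close>
definition is_phi_x :: "('r::comm_ring_1 \<Rightarrow> complex) \<Rightarrow> 'r \<Rightarrow> nat \<Rightarrow> 'r^2^2 \<Rightarrow> ('r^2^2 \<Rightarrow> complex) \<Rightarrow> bool" where
  "is_phi_x \<phi> w l xh ch \<longleftrightarrow>
     (\<forall>y. ch (mat 1 + mat (w ^ (l - 1)) ** y) = \<phi> (w ^ (l - 1) * trace (xh ** y)))"

text \<open>rho is primitive: the GL_2-orbit of the characters occurring in rho|K contains no
phi_x with x scalar. The conjugate of chi by g (with inverse h) is k \<mapsto> chi(g k h).
A scalar x in M_2(F_q) is the reduction of mat c for some c in R; phi_x only depends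
on the reduction of the lift.\<close>
definition primitive_rep :: "('r::comm_ring_1^2^2 \<Rightarrow> complex^'n^'n) \<Rightarrow> 'r \<Rightarrow> nat \<Rightarrow> ('r \<Rightarrow> complex) \<Rightarrow> bool" where
  "primitive_rep \<rho> w l \<phi> \<longleftrightarrow>
     \<not> (\<exists>ch g h c. occurs_in \<rho> w l ch \<and> g ** h = mat 1 \<and> h ** g = mat 1 \<and>
            is_phi_x \<phi> w l (mat c) (\<lambda>k. ch (g ** k ** h)))"

end

theory Submission
  imports Defs
begin


lemma mat_mult_entry: "(mat a ** (X::'a::comm_ring_1^'n^'m)) $ i $ j = a * X $ i $ j"
  by (simp add: matrix_matrix_mult_def mat_def if_distrib if_distribR cong: if_cong)

lemma mat_commute: "(A::'a::comm_ring_1^'n^'n) ** mat a = mat a ** A"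
  by (simp add: matrix_matrix_mult_def mat_def vec_eq_iff if_distrib if_distribR mult.commute cong: if_cong)

lemma matrix_add_rdistrib: "((B + C) ** A) = (B ** A) + (C ** A)"
  by (vector matrix_matrix_mult_def sum.distrib[symmetric] field_simps)

definition WW :: "'r::comm_ring_1 \<Rightarrow> 'r^2^2 \<Rightarrow> 'r^2^2" where
  "WW e y = mat 1 + mat e ** y"

lemma WW_mult:
  assumes "e * e = 0"
  shows "WW e X ** WW e Y = WW e (X + Y)"
proof -
  have z: "(mat e ** X) ** (mat e ** Y) = 0"
  proof -
    have "((mat e ** X) ** (mat e ** Y)) $ i $ j = 0" for i j
    proof -
      have "((mat e ** X) ** (mat e ** Y)) $ i $ j = (\<Sum>k\<in>UNIV. (mat e ** X)$i$k * (mat e ** Y)$k$j)"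
        by (simp add: matrix_matrix_mult_def)
      also have "\<dots> = (\<Sum>k\<in>UNIV. (e * e) * (X$i$k * Y$k$j))"
        by (simp add: mat_mult_entry mult.assoc mult.left_commute)
      finally show ?thesis by (simp add: assms)
    qed
    then show ?thesis by (simp add: vec_eq_iff)
  qed
  show ?thesis
    unfolding WW_def matrix_add_ldistrib matrix_add_rdistrib z matrix_mul_lid matrix_mul_rid
    by (simp add: add_ac)
qed

lemma WW_0: "WW e 0 = mat 1"
  by (simp add: WW_def)

lemma GL2_I: "A ** B = mat 1 \<Longrightarrow> B ** A = mat 1 \<Longrightarrow> A \<in> GL2"
  unfolding GL2_def by blast

lemma GL2_mult: "g \<in> GL2 \<Longrightarrow> h \<in> GL2 \<Longrightarrow> g ** h \<in> GL2"
proof -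
  assume "g \<in> GL2" "h \<in> GL2"
  then obtain g' h' where "g ** g' = mat 1" "g' ** g = mat 1" "h ** h' = mat 1" "h' ** h = mat 1"
    unfolding GL2_def by blast
  then show ?thesis
    by (intro GL2_I[of _ "h' ** g'"]) (simp_all add: matrix_mul_assoc, 
       simp_all add: matrix_mul_assoc[symmetric])
qed

lemma GL2_one: "mat 1 \<in> GL2"
  by (rule GL2_I[of _ "mat 1"]) simp_all

lemma WW_GL2: "e * e = 0 \<Longrightarrow> WW e X \<in> GL2"
  by (rule GL2_I[of _ "WW e (- X)"]) (simp_all add: WW_mult WW_0)

lemma WW_conj:
  assumes "g ** h = mat 1"
  shows "g ** WW e X ** h = WW e (g ** X ** h)"
proof -
  have "g ** (mat e ** X) = mat e ** (g ** X)"
    by (simp add: matrix_mul_assoc mat_commute)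
  then show ?thesis
    unfolding WW_def matrix_add_ldistrib matrix_add_rdistrib
    by (simp add: assms matrix_mul_assoc[symmetric])
qed

definition E12 :: "'r::comm_ring_1 \<Rightarrow> 'r^2^2" where
  "E12 a = vector [vector [0, a], vector [0, 0]]"

definition Dg :: "'r::comm_ring_1 \<Rightarrow> 'r^2^2" where
  "Dg a = vector [vector [a, 0], vector [0, 0]]"

lemma unip_WW: "unip (e * a) = WW e (E12 a)"
  by (simp add: unip_def WW_def E12_def vec_eq_iff forall_2 mat_mult_entry)
     (simp add: mat_def)

lemma unip_add: "unip a ** unip b = unip (a + b)"
  by (simp add: unip_def vec_eq_iff forall_2 matrix_matrix_mult_def sum_2)

lemma unip_0: "unip 0 = mat 1"
  by (simp add: unip_def vec_eq_iff forall_2 mat_def)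

lemma unip_GL2: "unip a \<in> GL2"
  by (rule GL2_I[of _ "unip (-a)"]) (simp_all add: unip_add unip_0)

lemma trace_E12: "trace (E12 a) = 0"
  by (simp add: trace_def sum_2 E12_def)

lemma trace_Dg: "trace (Dg a) = a"
  by (simp add: trace_def sum_2 Dg_def)

definition swp :: "'r::comm_ring_1^2^2" where
  "swp = vector [vector [0, 1], vector [1, 0]]"
definition gl :: "'r::comm_ring_1^2^2" where
  "gl = vector [vector [1, 0], vector [-1, 1]]"
definition gl' :: "'r::comm_ring_1^2^2" where
  "gl' = vector [vector [1, 0], vector [1, 1]]"

lemma swp_swp: "swp ** swp = mat 1"
  by (simp add: swp_def vec_eq_iff forall_2 matrix_matrix_mult_def sum_2 mat_def)
lemma gl_gl': "gl ** gl' = mat 1" "gl' ** gl = mat 1"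
  by (simp_all add: gl_def gl'_def vec_eq_iff forall_2 matrix_matrix_mult_def sum_2 mat_def)

lemma traceless_decomp:
  fixes y :: "'r::comm_ring_1^2^2"
  shows "y - Dg (trace y) = E12 (y$1$2 + y$2$2) + swp ** E12 (y$2$1 - y$2$2) ** swp
           + gl ** E12 (- y$2$2) ** gl'"
  by (simp add: vec_eq_iff forall_2 matrix_matrix_mult_def sum_2 Dg_def E12_def swp_def gl_def gl'_def trace_def)

lemma WW_split:
  assumes "e * e = 0"
  shows "WW e y = WW e (y - Dg (trace y)) ** WW e (Dg (trace y))"
  by (simp add: WW_mult assms)


section \<open>Chain ring facts\<close>

lemma add_char_neg: "add_char f \<Longrightarrow> f (- x) * f x = 1"
  unfolding add_char_def by (metis add.left_inverse)

lemma add_char_zero_mult: "add_char f \<Longrightarrow> f 0 = 1"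
  unfolding add_char_def by simp

lemma chain_form:
  fixes w :: "'r::comm_ring_1"
  assumes uw: "\<forall>a::'r. a dvd 1 \<or> w dvd a"
  shows "(\<exists>u k. k < n \<and> u dvd 1 \<and> a = u * w ^ k) \<or> (\<exists>b. a = w ^ n * b)"
proof (induction n)
  case 0
  then show ?case by auto
next
  case (Suc n)
  then show ?case
  proof
    assume "\<exists>u k. k < n \<and> u dvd 1 \<and> a = u * w ^ k"
    then show ?thesis by (blast intro: less_SucI)
  next
    assume "\<exists>b. a = w ^ n * b"
    then obtain b where b: "a = w ^ n * b" by blast
    show ?thesis
    proof (cases "b dvd 1")
      case True
      then show ?thesis using b by (metis lessI mult.commute)
    next
      case False
      then obtain b' where "b = w * b'" using uw by (meson dvdE)
      then show ?thesis using b by (metis mult.assoc power_Suc2)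
    qed
  qed
qed

locale chainring =
  fixes w :: "'r::{comm_ring_1,finite}" and l p :: nat
  assumes tr: "trunc_dvr_ring w l p" and l2: "l \<ge> 2"
begin

lemma uw: "\<forall>a::'r. a dvd 1 \<or> w dvd a" and wl: "w ^ l = 0" and wl1: "w ^ (l - 1) \<noteq> 0"
  using tr unfolding trunc_dvr_ring_def by auto

lemma ee: "w ^ (l - 1) * w ^ (l - 1) = 0"
proof -
  have "l - 1 + (l - 1) = l + (l - 2)" using l2 by arith
  then have "w ^ (l - 1) * w ^ (l - 1) = w ^ l * w ^ (l - 2)"
    by (metis power_add)
  then show ?thesis by (simp add: wl)
qed

lemma ew: "w ^ (l - 1) * w = 0"
  using l2 wl by (metis Suc_diff_1 not_numeral_le_zero not_gr_zero power_Suc2 le_0_eq)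

lemma nonzero_form:
  assumes "a \<noteq> 0"
  shows "\<exists>u k. k < l \<and> u dvd 1 \<and> a = u * w ^ k"
  using chain_form[OF uw, of l a] assms wl by auto

lemma nondeg_nonzero:
  assumes "nondeg_char w l f" "u \<noteq> 0"
  shows "\<exists>t. f (t * u) \<noteq> 1"
proof -
  obtain a where a: "f (w ^ (l - 1) * a) \<noteq> 1" using assms(1) unfolding nondeg_char_def by blast
  obtain v k where vk: "k < l" "v dvd 1" "u = v * w ^ k" using nonzero_form[OF assms(2)] by blast
  obtain v' where v': "1 = v * v'" using vk(2) by (meson dvdE)
  have "(v' * w ^ (l - 1 - k) * a) * u = (v * v') * (w ^ (l - 1 - k) * w ^ k) * a"
    by (simp add: vk(3) algebra_simps)
  also have "\<dots> = w ^ (l - 1) * a"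
    using vk(1) v' by (simp add: power_add[symmetric])
  finally show ?thesis using a by metis
qed

lemma char_sum_zero:
  assumes "nondeg_char w l f" "u \<noteq> 0"
  shows "(\<Sum>t\<in>UNIV. f (t * u)) = 0"
proof -
  obtain t0 where t0: "f (t0 * u) \<noteq> 1" using nondeg_nonzero[OF assms] by blast
  have fc: "add_char f" using assms(1) unfolding nondeg_char_def by blast
  have "(\<Sum>t\<in>UNIV. f (t * u)) = (\<Sum>t\<in>UNIV. f ((t + t0) * u))"
    by (rule sum.reindex_bij_witness[of _ "\<lambda>t. t + t0" "\<lambda>t. t - t0"]) auto
  also have "\<dots> = f (t0 * u) * (\<Sum>t\<in>UNIV. f (t * u))"
  proof -
    have "f ((t + t0) * u) = f (t0 * u) * f (t * u)" for t
      using fc unfolding add_char_def by (metis distrib_right mult.commute)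
    then show ?thesis by (simp add: sum_distrib_left)
  qed
  finally show ?thesis using t0
    by (metis mult_cancel_right1 mult.commute)
qed

lemma unit_of_nontriv:
  assumes "add_char f" "f (t * (w ^ (l - 1) * a)) \<noteq> 1"
  shows "t dvd 1"
proof (rule ccontr)
  assume "\<not> t dvd 1"
  then obtain s where "t = w * s" using uw by (meson dvdE)
  then have "t * (w ^ (l - 1) * a) = 0"
    using ew by (simp add: algebra_simps)
  then show False using assms unfolding add_char_def by simp
qed

lemma triv_on_w:
  assumes "nondeg_char w l f" "\<forall>r. f (t * (w * r)) = 1"
  shows "\<exists>c. t = w ^ (l - 1) * c"
proof (cases "t = 0")
  case True
  then show ?thesis by (intro exI[of _ 0]) simp
next
  case False
  obtain a where a: "f (w ^ (l - 1) * a) \<noteq> 1" using assms(1) unfolding nondeg_char_def by blast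
  obtain v k where vk: "k < l" "v dvd 1" "t = v * w ^ k" using nonzero_form[OF False] by blast
  obtain v' where v': "1 = v * v'" using vk(2) by (meson dvdE)
  show ?thesis
  proof (cases "k = l - 1")
    case True
    then show ?thesis using vk by (auto simp: mult.commute)
  next
    case False
    then have kl: "k + 1 + (l - 2 - k) = l - 1" using vk(1) by auto
    have "t * (w * (v' * w ^ (l - 2 - k) * a)) = (v * v') * (w ^ k * w * w ^ (l - 2 - k)) * a"
      by (simp add: vk(3) algebra_simps)
    also have "\<dots> = w ^ (l - 1) * a"
      using v' kl by (metis mult_1 power_Suc2 power_add Suc_eq_plus1)
    finally show ?thesis using a assms(2) by metis
  qed
qed

end

section \<open>Projection onto eigen-characters\<close>

lemma sum_smult: "(\<Sum>i\<in>S. c i *s (v::'a::comm_ring_1^'n)) = (\<Sum>i\<in>S. c i) *s v"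
  by (simp add: vec_eq_iff sum_distrib_right)

lemma char_proj:
  fixes act :: "'r::{comm_ring_1,finite} \<Rightarrow> complex^'n \<Rightarrow> complex^'n" and f :: "'r \<Rightarrow> complex"
  assumes sumz: "\<And>u. u \<noteq> 0 \<Longrightarrow> (\<Sum>t\<in>UNIV. f (t*u)) = 0"
   and fc: "add_char f"
   and act_add: "\<And>a b v. act (a+b) v = act a (act b v)"
   and act_0: "\<And>v. act 0 v = v"
   and act_plus: "\<And>a v v'. act a (v+v') = act a v + act a v'"
   and act_sc: "\<And>a c v. act a (c *s v) = c *s act a v"
  shows "\<exists>P. (\<forall>t a. act a (P t) = f (t*a) *s P t) \<and> (\<Sum>t\<in>UNIV. P t) = of_nat CARD('r) *s x"
proof -
  define P where "P = (\<lambda>t. \<Sum>u\<in>UNIV. f (-(t*u)) *s act u x)"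
  have act_zero: "act a 0 = 0" for a
    using act_sc[of a 0 0] by simp
  have act_sum: "act a (\<Sum>i\<in>S. g i) = (\<Sum>i\<in>S. act a (g i))" if "finite S" for a S g
    using that by (induction S rule: finite_induct) (simp_all add: act_zero act_plus)
  have fadd: "f (a + b) = f a * f b" for a b using fc unfolding add_char_def by blast
  have 1: "act a (P t) = f (t*a) *s P t" for t a
  proof -
    have "act a (P t) = (\<Sum>u\<in>UNIV. f (-(t*u)) *s act (a + u) x)"
      unfolding P_def by (simp add: act_sum act_sc act_add)
    also have "\<dots> = (\<Sum>u\<in>UNIV. f (-(t*(u - a))) *s act u x)"
      by (rule sum.reindex_bij_witness[of _ "\<lambda>u. u - a" "\<lambda>u. u + a"]) (auto simp: add.commute)
    also have "\<dots> = (\<Sum>u\<in>UNIV. f (t*a) *s (f (-(t*u)) *s act u x))"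
    proof (rule sum.cong[OF refl])
      fix u
      have "-(t*(u - a)) = -(t*u) + t*a" by (simp add: algebra_simps)
      then have "f (-(t*(u - a))) = f (t*a) * f (-(t*u))"
        by (metis fadd mult.commute)
      then show "f (-(t*(u - a))) *s act u x = f (t*a) *s (f (-(t*u)) *s act u x)"
        by (simp add: vec_eq_iff)
    qed
    also have "\<dots> = f (t*a) *s P t"
      unfolding P_def by (simp add: vec_eq_iff sum_distrib_left mult.assoc)
    finally show ?thesis .
  qed
  have 2: "(\<Sum>t\<in>UNIV. P t) = of_nat CARD('r) *s x"
  proof -
    have "(\<Sum>t\<in>UNIV. P t) = (\<Sum>u\<in>UNIV. (\<Sum>t\<in>UNIV. f (-(t*u))) *s act u x)"
      unfolding P_def by (subst sum.swap) (simp add: sum_smult)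
    also have "\<dots> = (\<Sum>u::'r\<in>UNIV. (if u = 0 then of_nat CARD('r) *s x else 0))"
    proof (rule sum.cong[OF refl])
      fix u :: 'r
      show "(\<Sum>t\<in>UNIV. f (-(t*u))) *s act u x = (if u = 0 then of_nat CARD('r) *s x else 0)"
      proof (cases "u = 0")
        case True
        then show ?thesis using fc by (simp add: act_0 add_char_def)
      next
        case False
        have "(\<Sum>t\<in>UNIV. f (-(t*u))) = (\<Sum>t\<in>UNIV. f (t*(-u)))" by simp
        also have "\<dots> = 0" using sumz[of "-u"] False by simp
        finally show ?thesis using False by simp
      qed
    qed
    also have "\<dots> = of_nat CARD('r) *s x" by simp
    finally show ?thesis .
  qed
  show ?thesis using 1 2 by blast
qed


lemma dot_mv: "(\<Sum>i\<in>UNIV. a$i * (A *v b)$i) = (\<Sum>i\<in>UNIV. (a v* A)$i * (b$i::'a::comm_ring_1))"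
  by (simp add: matrix_vector_mult_def vector_matrix_mult_def sum_distrib_left sum_distrib_right mult_ac)
     (rule sum.swap)

lemma vm_sum: "finite S \<Longrightarrow> (\<Sum>i\<in>S. g i) v* (A::'a::comm_ring_1^'n^'m) = (\<Sum>i\<in>S. g i v* A)"
  by (induction S rule: finite_induct) (simp_all add: vector_matrix_left_distrib)

lemma trace_scal: "trace (mat c ** (y::'a::comm_ring_1^'n^'n)) = c * trace y"
  by (simp add: trace_def mat_mult_entry sum_distrib_left)

lemma trace_conj: "g ** h = mat 1 \<Longrightarrow> trace (h ** y ** g) = trace (y::'a::comm_ring_1^'n^'n)"
  by (metis matrix_mul_assoc matrix_mul_lid trace_mul_sym)

lemma rows_id: "(\<forall>x. x v* A = x) \<Longrightarrow> A = (mat 1::'a::comm_ring_1^'n^'n)"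
proof -
  assume h: "\<forall>x. x v* A = x"
  have "A $ i $ j = mat 1 $ i $ j" for i j
  proof -
    have "(axis i 1 v* A) $ j = axis i 1 $ j" using h by simp
    then show ?thesis
      by (simp add: vector_matrix_mult_def axis_def mat_def if_distrib if_distribR cong: if_cong split: if_splits)
  qed
  then show ?thesis by (simp add: vec_eq_iff)
qed

lemma nonzero_vec: "v \<noteq> 0 \<Longrightarrow> \<exists>i. v $ i \<noteq> 0"
  by (simp add: vec_eq_iff)



lemma whittaker_imp_primitive:
  fixes w :: "'r::{comm_ring_1,finite}" and l p :: nat
    and \<rho> :: "'r^2^2 \<Rightarrow> complex^'n^'n"
    and \<phi> \<psi> :: "'r \<Rightarrow> complex"
  assumes cr: "chainring w l p"
    and nphi: "nondeg_char w l \<phi>"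
    and irr: "irreducible_rep \<rho>"
    and npsi: "nondeg_char w l \<psi>"
    and wh: "has_whittaker \<rho> \<psi>"
  shows "primitive_rep \<rho> w l \<phi>"
proof (rule ccontr)
  define e where "e = w ^ (l - 1)"
  have ee: "e * e = 0" using chainring.ee[OF cr] by (simp add: e_def)
  have rep: "is_rep \<rho>" and irrW: "\<And>W. csubspace W \<Longrightarrow> (\<forall>g\<in>GL2. \<forall>v\<in>W. \<rho> g *v v \<in> W) \<Longrightarrow> W = {0} \<or> W = UNIV"
    using irr unfolding irreducible_rep_def by blast+
  have rho1: "\<rho> (mat 1) = mat 1" and rhom: "\<And>g h. g \<in> GL2 \<Longrightarrow> h \<in> GL2 \<Longrightarrow> \<rho> (g ** h) = \<rho> g ** \<rho> h"
    using rep unfolding is_rep_def by blast+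
  have fphi: "add_char \<phi>" using nphi unfolding nondeg_char_def by blast
  have KlW: "Kl w l = {WW e y | y. True}" unfolding Kl_def WW_def e_def by simp
  assume "\<not> primitive_rep \<rho> w l \<phi>"
  then obtain ch g h c where occ: "occurs_in \<rho> w l ch" and gh: "g ** h = mat 1" "h ** g = mat 1"
    and phx: "is_phi_x \<phi> w l (mat c) (\<lambda>k. ch (g ** k ** h))"
    unfolding primitive_rep_def by blast
  define \<Phi> where "\<Phi> = (\<lambda>s. \<phi> (e * (c * s)))"
  have chW: "ch (WW e y) = \<Phi> (trace y)" for y
  proof -
    have "g ** (h ** y ** g) ** h = y"
      using gh by (metis matrix_mul_assoc matrix_mul_lid matrix_mul_rid)
    then have "WW e y = g ** WW e (h ** y ** g) ** h"
      using WW_conj[OF gh(1), of e "h ** y ** g"] by simp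
    then have "ch (WW e y) = \<phi> (e * trace (mat c ** (h ** y ** g)))"
      using phx unfolding is_phi_x_def WW_def e_def by metis
    then show ?thesis by (simp add: \<Phi>_def trace_scal trace_conj[OF gh(1)])
  qed
  obtain v where v: "v \<noteq> 0" "\<forall>k\<in>Kl w l. \<rho> k *v v = ch k *s v"
    using occ unfolding occurs_in_def by blast
  define E where "E = {u. \<forall>y. \<rho> (WW e y) *v u = \<Phi> (trace y) *s u}"
  have vE: "v \<in> E" using v(2) chW unfolding E_def KlW by auto
  have csE: "csubspace E"
    unfolding csubspace_def E_def
    by (auto simp: matrix_vector_right_distrib vector_scalar_commute vec_eq_iff algebra_simps)
  have invE: "\<forall>x\<in>GL2. \<forall>u\<in>E. \<rho> x *v u \<in> E"
  proof (intro ballI)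
    fix x :: "'r^2^2" and u assume x: "x \<in> GL2" and u: "u \<in> E"
    obtain x' where x': "x ** x' = mat 1" "x' ** x = mat 1" using x unfolding GL2_def by blast
    show "\<rho> x *v u \<in> E" unfolding E_def
    proof (intro CollectI allI)
      fix y
      have "WW e y ** x = x ** WW e (x' ** y ** x)"
        using WW_conj[OF x'(2), of e y] x' by (metis matrix_mul_assoc matrix_mul_lid)
      then have "\<rho> (WW e y) *v (\<rho> x *v u) = \<rho> x *v (\<rho> (WW e (x' ** y ** x)) *v u)"
        using rhom[OF WW_GL2[OF ee] x, of y] rhom[OF x WW_GL2[OF ee], of "x' ** y ** x"]
        by (simp add: matrix_vector_mul_assoc)
      also have "\<dots> = \<Phi> (trace y) *s (\<rho> x *v u)"
        using u trace_conj[OF x'(1), of y] unfolding E_def by (simp add: vector_scalar_commute)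
      finally show "\<rho> (WW e y) *v (\<rho> x *v u) = \<Phi> (trace y) *s (\<rho> x *v u)" .
    qed
  qed
  have EU: "E = UNIV" using irrW[OF csE invE] vE v(1) by auto
  obtain T where T1: "\<forall>v w x. x \<in> GL2 \<longrightarrow> T (v + w) x = T v x + T w x"
    and T2: "\<forall>c v x. x \<in> GL2 \<longrightarrow> T (c *s v) x = c * T v x"
    and T3: "\<forall>v u x. x \<in> GL2 \<longrightarrow> T v (unip u ** x) = \<psi> u * T v x"
    and T4: "\<forall>v g x. g \<in> GL2 \<longrightarrow> x \<in> GL2 \<longrightarrow> T (\<rho> g *v v) x = T v (x ** g)"
    and T5: "\<exists>v. \<exists>x\<in>GL2. T v x \<noteq> 0"
    using wh unfolding has_whittaker_def by blast
  obtain v0 x0 where x0: "x0 \<in> GL2" and Tv0: "T v0 x0 \<noteq> 0" using T5 by blast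
  obtain x0' where x0': "x0 ** x0' = mat 1" "x0' ** x0 = mat 1" using x0 unfolding GL2_def by blast
  obtain a where a: "\<psi> (e * a) \<noteq> 1" using npsi unfolding nondeg_char_def e_def by blast
  have "unip (e * a) ** x0 = x0 ** WW e (x0' ** E12 a ** x0)"
    using WW_conj[OF x0'(2), of e "E12 a"] x0' unip_WW[of e a] by (metis matrix_mul_assoc matrix_mul_lid)
  then have "\<psi> (e * a) * T v0 x0 = T v0 (x0 ** WW e (x0' ** E12 a ** x0))"
    using T3 x0 by metis
  also have "\<dots> = T (\<rho> (WW e (x0' ** E12 a ** x0)) *v v0) x0"
    using T4 x0 WW_GL2[OF ee] by metis
  also have "\<dots> = T (\<Phi> 0 *s v0) x0"
  proof -
    have "v0 \<in> E" using EU by simp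
    then have "\<rho> (WW e (x0' ** E12 a ** x0)) *v v0 = \<Phi> (trace (x0' ** E12 a ** x0)) *s v0"
      unfolding E_def by blast
    then show ?thesis using trace_conj[OF x0'(1), of "E12 a"] trace_E12[of a] by simp
  qed
  also have "\<dots> = T v0 x0"
    using T2 x0 fphi unfolding \<Phi>_def add_char_def by simp
  finally show False using a Tv0 by simp
qed



lemma primitive_imp_whittaker:
  fixes w :: "'r::{comm_ring_1,finite}" and l p :: nat
    and \<rho> :: "'r^2^2 \<Rightarrow> complex^'n^'n"
    and \<phi> \<psi> :: "'r \<Rightarrow> complex"
  assumes cr: "chainring w l p"
    and nphi: "nondeg_char w l \<phi>"
    and rep: "is_rep \<rho>"
    and npsi: "nondeg_char w l \<psi>"
    and prim: "primitive_rep \<rho> w l \<phi>"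
  shows "has_whittaker \<rho> \<psi>"
proof -
  define e where "e = w ^ (l - 1)"
  have ee: "e * e = 0" using chainring.ee[OF cr] by (simp add: e_def)
  have rho1: "\<rho> (mat 1) = mat 1" and rhom: "\<And>g h. g \<in> GL2 \<Longrightarrow> h \<in> GL2 \<Longrightarrow> \<rho> (g ** h) = \<rho> g ** \<rho> h"
    using rep unfolding is_rep_def by blast+
  have fphi: "add_char \<phi>" using nphi unfolding nondeg_char_def by blast
  have fpsi: "add_char \<psi>" using npsi unfolding nondeg_char_def by blast
  have KlW: "Kl w l = {WW e y | y. True}" unfolding Kl_def WW_def e_def by simp
  have card0: "(of_nat CARD('r) :: complex) \<noteq> 0" by simp
  show ?thesis
  proof (cases "\<exists>a x. x v* \<rho> (unip (e * a)) \<noteq> x")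
    case True
    then obtain a0 x0 where a0: "x0 v* \<rho> (unip (e * a0)) \<noteq> x0" by blast
    define act where "act = (\<lambda>a v. v v* \<rho> (unip a))"
    have act_add: "act (a + b) v = act a (act b v)" for a b v
    proof -
      have "unip (a + b) = unip b ** unip a" by (simp add: unip_add add.commute)
      then show ?thesis unfolding act_def by (simp add: rhom unip_GL2 vector_matrix_mul_assoc)
    qed
    have act_0: "act 0 v = v" for v unfolding act_def by (simp add: unip_0 rho1)
    have act_plus: "act a (v + v') = act a v + act a v'" for a v v'
      unfolding act_def by (simp add: vector_matrix_left_distrib)
    have act_sc: "act a (c *s v) = c *s act a v" for a c v
      unfolding act_def by (simp add: scalar_vector_matrix_assoc)
    obtain P where P1: "\<forall>t a. act a (P t) = \<psi> (t*a) *s P t"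
      and P2: "(\<Sum>t\<in>UNIV. P t) = of_nat CARD('r) *s x0"
      using char_proj[OF _ fpsi act_add act_0 act_plus act_sc, of x0]
        chainring.char_sum_zero[OF cr npsi] by blast
    have "(\<Sum>t\<in>UNIV. (\<psi> (t * (e * a0)) - 1) *s P t) = (\<Sum>t\<in>UNIV. P t) v* \<rho> (unip (e * a0)) - (\<Sum>t\<in>UNIV. P t)"
      using P1 unfolding act_def by (simp add: vm_sum sum_subtractf vec_eq_iff algebra_simps)
    also have "\<dots> = of_nat CARD('r) *s (x0 v* \<rho> (unip (e * a0)) - x0)"
      unfolding P2 by (simp add: scalar_vector_matrix_assoc vec_eq_iff algebra_simps)
    also have "\<dots> \<noteq> 0" using a0 card0 by (simp add: vec_eq_iff)
    finally obtain t where t: "(\<psi> (t * (e * a0)) - 1) *s P t \<noteq> 0"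
      by (meson sum.neutral)
    have Pt: "P t \<noteq> 0" using t by auto
    have tnt: "\<psi> (t * (e * a0)) \<noteq> 1" using t by auto
    have "t dvd 1" using chainring.unit_of_nontriv[OF cr fpsi] tnt unfolding e_def by blast
    then obtain s where ts: "1 = t * s" by (meson dvdE)
    define d where "d = (vector [vector [s, 0], vector [0, 1]] :: 'r^2^2)"
    define d' where "d' = (vector [vector [t, 0], vector [0, 1]] :: 'r^2^2)"
    have dd': "d ** d' = mat 1" "d' ** d = mat 1"
      using ts by (simp_all add: d_def d'_def vec_eq_iff forall_2 matrix_matrix_mult_def sum_2 mat_def mult.commute)
    have dGL: "d \<in> GL2" "d' \<in> GL2" using dd' GL2_I by blast+
    have du: "d ** unip u = unip (s * u) ** d" for u
      by (simp add: d_def unip_def vec_eq_iff forall_2 matrix_matrix_mult_def sum_2)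
    define v2 where "v2 = P t v* \<rho> d"
    have v2eig: "v2 v* \<rho> (unip u) = \<psi> u *s v2" for u
    proof -
      have "v2 v* \<rho> (unip u) = P t v* \<rho> (unip (s * u) ** d)"
        unfolding v2_def by (simp add: vector_matrix_mul_assoc rhom dGL unip_GL2 du[symmetric])
      also have "\<dots> = (\<psi> (t * (s * u)) *s P t) v* \<rho> d"
        using P1 unfolding act_def
        by (simp add: vector_matrix_mul_assoc[symmetric] rhom dGL unip_GL2 scalar_vector_matrix_assoc)
      also have "\<dots> = \<psi> u *s v2"
        using ts unfolding v2_def by (simp add: scalar_vector_matrix_assoc mult.assoc[symmetric])
      finally show ?thesis .
    qed
    have v2nz: "v2 \<noteq> 0"
    proof
      assume "v2 = 0"
      then have "v2 v* \<rho> d' = 0" by simp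
      moreover have "v2 v* \<rho> d' = P t"
        unfolding v2_def by (simp add: vector_matrix_mul_assoc rhom[symmetric] dGL dd' rho1)
      ultimately show False using Pt by simp
    qed
    obtain i where i: "v2 $ i \<noteq> 0" using nonzero_vec[OF v2nz] by blast
    define T where "T = (\<lambda>v' x. \<Sum>j\<in>UNIV. (v2 v* \<rho> x) $ j * (v' :: complex^'n) $ j)"
    show ?thesis unfolding has_whittaker_def
    proof (intro exI[of _ T] conjI allI impI)
      fix v v' and x :: "'r^2^2"
      show "T (v + v') x = T v x + T v' x" unfolding T_def by (simp add: distrib_left sum.distrib)
    next
      fix c v and x :: "'r^2^2"
      show "T (c *s v) x = c * T v x" unfolding T_def by (simp add: sum_distrib_left mult_ac)
    next
      fix v u and x :: "'r^2^2" assume x: "x \<in> GL2"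
      show "T v (unip u ** x) = \<psi> u * T v x"
        unfolding T_def using x
        by (simp add: rhom unip_GL2 vector_matrix_mul_assoc[symmetric] v2eig scalar_vector_matrix_assoc
              sum_distrib_left mult_ac)
    next
      fix v and g x :: "'r^2^2" assume g: "g \<in> GL2" and x: "x \<in> GL2"
      show "T (\<rho> g *v v) x = T v (x ** g)"
        unfolding T_def using g x
        by (simp add: dot_mv rhom vector_matrix_mul_assoc)
    next
      show "\<exists>v. \<exists>x\<in>GL2. T v x \<noteq> 0"
      proof (intro exI bexI)
        show "T (axis i 1) (mat 1) \<noteq> 0"
          unfolding T_def using i by (simp add: rho1 axis_def if_distrib if_distribR cong: if_cong)
      qed (rule GL2_one)
    qed
  next
    case False
    then have triv: "\<rho> (unip (e * a)) = mat 1" for a using rows_id by blast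
    have swpGL: "swp \<in> GL2" using GL2_I swp_swp by blast
    have glGL: "gl \<in> GL2" "gl' \<in> GL2" using GL2_I gl_gl' by blast+
    have conj1: "\<rho> (WW e (g ** E12 b ** g')) = mat 1"
      if g: "g \<in> GL2" "g' \<in> GL2" "g ** g' = mat 1" for g g' b
    proof -
      have "WW e (g ** E12 b ** g') = g ** unip (e * b) ** g'"
        using WW_conj[OF g(3), of e "E12 b"] unip_WW[of e b] by simp
      then have "\<rho> (WW e (g ** E12 b ** g')) = \<rho> g ** \<rho> (unip (e * b)) ** \<rho> g'"
        using g by (simp add: rhom GL2_mult unip_GL2)
      also have "\<dots> = \<rho> (g ** g')" using triv[of b] rhom[OF g(1) g(2)] by simp
      finally show ?thesis using g rho1 by simp
    qed
    have traceless: "\<rho> (WW e (y - Dg (trace y))) = mat 1" for y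
    proof -
      let ?A = "E12 (y$1$2 + y$2$2)" and ?B = "swp ** E12 (y$2$1 - y$2$2) ** swp"
        and ?C = "gl ** E12 (- y$2$2) ** gl'"
      have "WW e (y - Dg (trace y)) = WW e ?A ** WW e ?B ** WW e ?C"
        unfolding traceless_decomp by (simp add: WW_mult ee)
      then have "\<rho> (WW e (y - Dg (trace y))) = \<rho> (WW e ?A) ** \<rho> (WW e ?B) ** \<rho> (WW e ?C)"
        by (simp add: rhom WW_GL2 ee GL2_mult)
      also have "\<dots> = mat 1"
        using triv conj1[OF swpGL swpGL swp_swp] conj1[OF glGL gl_gl'(1)]
        by (simp add: unip_WW[symmetric])
      finally show ?thesis .
    qed
    have Wy: "\<rho> (WW e y) = \<rho> (WW e (Dg (trace y)))" for y
      using WW_split[OF ee, of y] traceless[of y] by (simp add: rhom WW_GL2 ee)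
    define act where "act = (\<lambda>a v. \<rho> (WW e (Dg a)) *v v)"
    have Dg_add: "Dg (a + b) = Dg a + Dg b" for a b :: 'r
      by (simp add: Dg_def vec_eq_iff forall_2)
    have act_add: "act (a + b) v = act a (act b v)" for a b v
      unfolding act_def Dg_add WW_mult[OF ee, symmetric]
      by (simp add: rhom WW_GL2 ee matrix_vector_mul_assoc)
    have act_0: "act 0 v = v" for v
    proof -
      have "Dg (0::'r) = 0" by (simp add: Dg_def vec_eq_iff forall_2)
      then show ?thesis unfolding act_def by (simp add: WW_0 rho1)
    qed
    have act_plus: "act a (v + v') = act a v + act a v'" for a v v'
      unfolding act_def by (simp add: matrix_vector_right_distrib)
    have act_sc: "act a (c *s v) = c *s act a v" for a c v
      unfolding act_def by (simp add: vector_scalar_commute)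
    define x0 where "x0 = (axis undefined 1 :: complex^'n)"
    have x0nz: "x0 \<noteq> 0" unfolding x0_def by (simp add: vec_eq_iff axis_def)
    obtain P where P1: "\<forall>t a. act a (P t) = \<phi> (t*a) *s P t"
      and P2: "(\<Sum>t\<in>UNIV. P t) = of_nat CARD('r) *s x0"
      using char_proj[OF _ fphi act_add act_0 act_plus act_sc, of x0]
        chainring.char_sum_zero[OF cr nphi] by blast
    have "(\<Sum>t\<in>UNIV. P t) \<noteq> 0" unfolding P2 using x0nz card0 by (simp add: vec_eq_iff)
    then obtain t where Pt: "P t \<noteq> 0" by (meson sum.neutral)
    obtain i1 where i1: "P t $ i1 \<noteq> 0" using nonzero_vec[OF Pt] by blast
    have ew: "e * w = 0" using chainring.ew[OF cr] by (simp add: e_def)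
    have "\<phi> (t * (w * r)) = 1" for r
    proof -
      have "mat e ** Dg (w * r) = 0"
        by (simp add: vec_eq_iff forall_2 mat_mult_entry Dg_def mult.assoc[symmetric] ew)
      then have "WW e (Dg (w * r)) = mat 1" by (simp add: WW_def)
      then have "act (w * r) (P t) = P t" unfolding act_def by (simp add: rho1)
      then have "\<phi> (t * (w * r)) * P t $ i1 = P t $ i1" using P1 by (metis vector_smult_component)
      then show ?thesis using i1 by simp
    qed
    then obtain c where tc: "t = e * c" using chainring.triv_on_w[OF cr nphi] unfolding e_def by blast
    have main: "\<rho> (WW e y) *v P t = \<phi> (t * trace y) *s P t" for y
      using P1 Wy[of y] unfolding act_def by (simp add: trace_Dg)
    define ch where "ch = (\<lambda>k. (\<rho> k *v P t) $ i1 / P t $ i1)"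
    have chW: "ch (WW e y) = \<phi> (t * trace y)" for y
      unfolding ch_def main using i1 by simp
    have ex: "\<exists>ch g h c. occurs_in \<rho> w l ch \<and> g ** h = mat 1 \<and> h ** g = mat 1 \<and>
            is_phi_x \<phi> w l (mat c) (\<lambda>k. ch (g ** k ** h))"
    proof (intro exI[of _ ch] exI[of _ "mat 1"] exI[of _ c] conjI)
      show "occurs_in \<rho> w l ch"
        unfolding occurs_in_def KlW using Pt main chW by auto
    next
      show "mat 1 ** mat 1 = (mat 1 :: 'r^2^2)" by simp
      then show "mat 1 ** mat 1 = (mat 1 :: 'r^2^2)" .
    next
      show "is_phi_x \<phi> w l (mat c) (\<lambda>k. ch (mat 1 ** k ** mat 1))"
        unfolding is_phi_x_def
        using chW tc by (simp add: WW_def e_def trace_scal mult.assoc)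
    qed
    then show ?thesis using prim unfolding primitive_rep_def by blast
  qed
qed


theorem theorem5p2:
  fixes w :: "'r::{comm_ring_1,finite}" and l p :: nat
    and \<rho> :: "'r^2^2 \<Rightarrow> complex^'n^'n"
    and \<phi> \<psi> :: "'r \<Rightarrow> complex"
  assumes "trunc_dvr_ring w l p"
    and "odd p"
    and "l \<ge> 2"
    and "nondeg_char w l \<phi>"
    and "irreducible_rep \<rho>"
    and "nondeg_char w l \<psi>"
  shows "has_whittaker \<rho> \<psi> \<longleftrightarrow> primitive_rep \<rho> w l \<phi>"
proof -
  have cr: "chainring w l p" using assms(1,3) by (rule chainring.intro)
  have rep: "is_rep \<rho>" using assms(5) unfolding irreducible_rep_def by blast
  show ?thesis
    using whittaker_imp_primitive[OF cr assms(4) assms(5) assms(6)]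
      primitive_imp_whittaker[OF cr assms(4) rep assms(6)] by blast
qed

end
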